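(* For all integers $t,s\ge 0$ and $r\ge 1$, $$\max_{\mathbf{u}\in\mathbb{Z}_+^r}\bigl|\mathcal{A}_{t,s}(\mathbf{u})\bigr| = A_{t,s}(r).$$ Consequently, for any $q\ge2$, $\max_{\mathbf{x}\in J_r^*}|\mathcal{B}_{t,s}(\mathbf{x})|=A_{t,s}(r)$.
   Context: For $\mathbf{u}=(u_1,\dots,u_r)\in\mathbb{Z}_+^r$ (positive integers), the asymmetric error ball is $\mathcal{A}_{t,s}(\mathbf{u})=\{\mathbf{v}\in\mathbb{Z}_+^r:\ \sum_{i=1}^r\max\{0,u_i-v_i\}\le s,\ \sum_{i=1}^r\max\{0,v_i-u_i\}\le t\}$. The numbers $A_{t,s}(r)$ (integers $t,s$, $r\ge1$) are defined by: $A_{t,s}(r)=0$ if $t<0$ or $s<0$; $A_{t,s}(1)=t+s+1$ for $t,s\ge0$; for $r\ge2$, $t,s\ge0$: $A_{t,s}(r)=\sum_{i=1}^{t}A_{t-i,s}(r-1)+\sum_{i=1}^{s}A_{t,s-i}(r-1)+A_{t,s}(r-1)$. For the consequence: $J_r^*$ is the set of strings over $\Sigma_q=\{0,\dots,q-1\}$ with exactly $r$ runs; writing $\mathbf{x}=c_1^{u_1}\cdots c_r^{u_r}$ ($c_i\ne c_{i+1}$, $u_i\ge1$), the sticky-insdel ball $\mathcal{B}_{t,s}(\mathbf{x})$ is the set of strings $c_1^{v_1}\cdots c_r^{v_r}$ with $(v_1,\dots,v_r)\in\mathcal{A}_{t,s}(u_1,\dots,u_r)$ (i.e. strings obtainable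 by at most $t$ sticky insertions and at most $s$ sticky deletions). *)

theory Defs
  imports Main
begin

definition pos_vec :: "nat \<Rightarrow> nat list \<Rightarrow> bool" where
  "pos_vec r u \<longleftrightarrow> length u = r \<and> (\<forall>x\<in>set u. x \<ge> 1)"

definition asym_ball :: "nat \<Rightarrow> nat \<Rightarrow> nat list \<Rightarrow> nat list set" where
  "asym_ball t s u = {v. pos_vec (length u) v \<and>
      (\<Sum>i<length u. u ! i - v ! i) \<le> s \<and>
      (\<Sum>i<length u. v ! i - u ! i) \<le> t}"
  (* nat subtraction truncates: u!i - v!i = max 0 (u_i - v_i) *)

(* The numbers A_{t,s}(r) for t,s >= 0, r >= 1 (the value for r = 0 is irrelevant).
   Terms with negative t or s are 0 and hence omitted. *)
fun A_num :: "nat \<Rightarrow> nat \<Rightarrow> nat \<Rightarrow> nat" where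
  "A_num t s 0 = 0"
| "A_num t s (Suc 0) = t + s + 1"
| "A_num t s (Suc (Suc r)) =
     (\<Sum>i=1..t. A_num (t - i) s (Suc r)) + (\<Sum>i=1..s. A_num t (s - i) (Suc r)) + A_num t s (Suc r)"

definition runs_string :: "'a list \<Rightarrow> nat list \<Rightarrow> 'a list" where
  "runs_string cs us = concat (map (\<lambda>(c, n). replicate n c) (zip cs us))"

definition J_star :: "nat \<Rightarrow> nat \<Rightarrow> nat list set" where
  "J_star q r = {x. set x \<subseteq> {0..<q} \<and> length (remdups_adj x) = r}"

definition sticky_ball :: "nat \<Rightarrow> nat \<Rightarrow> nat list \<Rightarrow> nat list set" where
  "sticky_ball t s x = {runs_string cs vs | cs us vs.
      runs_string cs us = x \<and> length cs = length us \<and> pos_vec (length cs) us \<and>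
      (\<forall>i. Suc i < length cs \<longrightarrow> cs ! i \<noteq> cs ! Suc i) \<and>
      vs \<in> asym_ball t s us}"

end

theory Submission imports Defs begin

fun N :: "nat \<Rightarrow> nat \<Rightarrow> nat \<Rightarrow> nat" where
  "N t s 0 = 1"
| "N t s (Suc r) = (\<Sum>i=1..t. N (t - i) s r) + (\<Sum>i=1..s. N t (s - i) r) + N t s r"

lemma A_N: "A_num t s (Suc r) = N t s (Suc r)"
proof (induction r arbitrary: t s)
  case 0 then show ?case by simp
next
  case (Suc r)
  have "A_num t s (Suc (Suc r)) = (\<Sum>i=1..t. N (t - i) s (Suc r)) + (\<Sum>i=1..s. N t (s - i) (Suc r)) + N t s (Suc r)"
    by (simp only: A_num.simps(3) Suc.IH)
  also have "\<dots> = N t s (Suc (Suc r))" by (rule N.simps(2)[symmetric])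
  finally show ?case .
qed

fun ball' :: "nat \<Rightarrow> nat \<Rightarrow> nat list \<Rightarrow> nat list set" where
  "ball' t s [] = {[]}"
| "ball' t s (a#u) = (\<Union>i\<in>{1..t}. Cons (a+i) ` ball' (t-i) s u) \<union> Cons a ` ball' t s u
     \<union> (\<Union>i\<in>{1..min s (a-1)}. Cons (a-i) ` ball' t (s-i) u)"

lemma ball'_finite: "finite (ball' t s u)"
  by (induction u arbitrary: t s) auto

lemma card_UN_Cons:
  assumes "finite I" "inj_on f I" "\<And>i. finite (S i)"
  shows "card (\<Union>i\<in>I. Cons (f i) ` S i) = (\<Sum>i\<in>I. card (S i))"
proof -
  have "card (\<Union>i\<in>I. Cons (f i) ` S i) = (\<Sum>i\<in>I. card (Cons (f i) ` S i))"
    using assms by (intro card_UN_disjoint) (auto simp: inj_on_def)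
  also have "\<dots> = (\<Sum>i\<in>I. card (S i))"
    by (intro sum.cong refl card_image) (auto simp: inj_on_def)
  finally show ?thesis .
qed

lemma ball'_card:
  "card (ball' t s u) \<le> N t s (length u) \<and> ((\<forall>x\<in>set u. x > s) \<longrightarrow> card (ball' t s u) = N t s (length u))"
proof (induction u arbitrary: t s)
  case Nil then show ?case by simp
next
  case (Cons a u)
  define A1 where "A1 = (\<Union>i\<in>{1..t}. Cons (a+i) ` ball' (t-i) s u)"
  define A2 where "A2 = Cons a ` ball' t s u"
  define A3 where "A3 = (\<Union>i\<in>{1..min s (a-1)}. Cons (a-i) ` ball' t (s-i) u)"
  have fin: "finite A1" "finite A2" "finite A3" unfolding A1_def A2_def A3_def
    by (auto simp: ball'_finite)
  have d12: "A1 \<inter> A2 = {}" "(A1 \<union> A2) \<inter> A3 = {}" unfolding A1_def A2_def A3_def by auto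
  have c1: "card A1 = (\<Sum>i=1..t. card (ball' (t-i) s u))" unfolding A1_def
    by (rule card_UN_Cons) (auto simp: ball'_finite inj_on_def)
  have c2: "card A2 = card (ball' t s u)" unfolding A2_def
    by (rule card_image) (auto simp: inj_on_def)
  have c3: "card A3 = (\<Sum>i=1..min s (a-1). card (ball' t (s-i) u))" unfolding A3_def
    by (rule card_UN_Cons) (auto simp: ball'_finite inj_on_def)
  have "ball' t s (a#u) = A1 \<union> A2 \<union> A3" unfolding A1_def A2_def A3_def by simp
  then have ce: "card (ball' t s (a#u)) = card A1 + card A2 + card A3"
    using fin d12 by (simp add: card_Un_disjoint)
  have le1: "card A1 \<le> (\<Sum>i=1..t. N (t-i) s (length u))"
    unfolding c1 by (intro sum_mono) (use Cons.IH in blast)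
  have le2: "card A2 \<le> N t s (length u)" using Cons.IH c2 by simp
  have "card A3 \<le> (\<Sum>i=1..min s (a-1). N t (s-i) (length u))"
    unfolding c3 by (intro sum_mono) (use Cons.IH in blast)
  also have "\<dots> \<le> (\<Sum>i=1..s. N t (s-i) (length u))"
    by (intro sum_mono2) auto
  finally have le3: "card A3 \<le> (\<Sum>i=1..s. N t (s-i) (length u))" .
  show ?case
  proof
    show "card (ball' t s (a#u)) \<le> N t s (length (a#u))"
      using ce le1 le2 le3 by simp
  next
    show "(\<forall>x\<in>set (a#u). x > s) \<longrightarrow> card (ball' t s (a#u)) = N t s (length (a#u))"
    proof
      assume h: "\<forall>x\<in>set (a#u). x > s"
      then have m: "min s (a-1) = s" by auto
      have e1: "card A1 = (\<Sum>i=1..t. N (t-i) s (length u))"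
        unfolding c1 by (intro sum.cong refl) (use Cons.IH h in auto)
      have e2: "card A2 = N t s (length u)" using Cons.IH c2 h by simp
      have e3: "card A3 = (\<Sum>i=1..s. N t (s-i) (length u))"
        unfolding c3 m
      proof (intro sum.cong refl)
        fix i assume "i \<in> {1..s}"
        have "\<forall>x\<in>set u. s - i < x" using h by auto
        then show "card (ball' t (s - i) u) = N t (s - i) (length u)" using Cons.IH by blast
      qed
      show "card (ball' t s (a#u)) = N t s (length (a#u))"
        using ce e1 e2 e3 by simp
    qed
  qed
qed

definition P :: "nat \<Rightarrow> nat \<Rightarrow> nat list \<Rightarrow> nat list \<Rightarrow> bool" where
  "P t s u v \<longleftrightarrow> length v = length u \<and> (\<forall>x\<in>set v. x \<ge> 1) \<and>
     sum_list (map (\<lambda>(x,y). x - y) (zip u v)) \<le> s \<and> sum_list (map (\<lambda>(x,y). y - x) (zip u v)) \<le> t"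

lemma ball'_Cons_mem: "b#w \<in> ball' t s (a#u) \<longleftrightarrow>
   (\<exists>i\<in>{1..t}. b = a+i \<and> w \<in> ball' (t-i) s u) \<or> (b = a \<and> w \<in> ball' t s u) \<or>
   (\<exists>i\<in>{1..min s (a-1)}. b = a-i \<and> w \<in> ball' t (s-i) u)"
  by (simp only: ball'.simps) blast

lemma ball'_mem:
  assumes "\<forall>x\<in>set u. x \<ge> 1"
  shows "v \<in> ball' t s u \<longleftrightarrow> P t s u v"
  using assms
proof (induction u arbitrary: t s v)
  case Nil then show ?case by (auto simp: P_def)
next
  case (Cons a u)
  have a1: "a \<ge> 1" using Cons.prems by simp
  have IH: "\<And>t s w. w \<in> ball' t s u \<longleftrightarrow> P t s u w" using Cons by simp
  show ?case
  proof (cases v)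
    case Nil then show ?thesis by (auto simp: P_def)
  next
    case (Cons b w)
    have Pc: "P t s (a#u) (b#w) \<longleftrightarrow> b \<ge> 1 \<and> a - b \<le> s \<and> b - a \<le> t \<and> P (t - (b-a)) (s - (a-b)) u w"
      by (auto simp: P_def)
    have "b#w \<in> ball' t s (a#u) \<longleftrightarrow> P t s (a#u) (b#w)"
    proof (cases "a < b")
      case True
      have "b#w \<in> ball' t s (a#u) \<longleftrightarrow> (b - a \<le> t \<and> w \<in> ball' (t-(b-a)) s u)"
      proof
        assume "b#w \<in> ball' t s (a#u)"
        then consider (A) i where "i\<in>{1..t}" "b = a+i" "w \<in> ball' (t-i) s u"
          | (B) "b = a" | (C) i where "i\<in>{1..min s (a-1)}" "b = a-i"
          unfolding ball'_Cons_mem by blast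
        then show "b - a \<le> t \<and> w \<in> ball' (t-(b-a)) s u"
        proof cases
          case (A i) then show ?thesis by simp
        next
          case B then show ?thesis using True by simp
        next
          case (C i) then show ?thesis using True by simp
        qed
      next
        assume h: "b - a \<le> t \<and> w \<in> ball' (t-(b-a)) s u"
        have "b - a \<in> {1..t}" "b = a + (b - a)" using h True by auto
        then show "b#w \<in> ball' t s (a#u)" unfolding ball'_Cons_mem using h by blast
      qed
      then show ?thesis using True Pc IH a1 by auto
    next
      case False
      show ?thesis
      proof (cases "a = b")
        case True
        have "b#w \<in> ball' t s (a#u) \<longleftrightarrow> w \<in> ball' t s u"
          unfolding ball'_Cons_mem using True by auto
        then show ?thesis using True Pc IH a1 by simp
      next
        case False2: False
        with False have ba: "b < a" by simp
        have "b#w \<in> ball' t s (a#u) \<longleftrightarrow> (b \<ge> 1 \<and> a - b \<le> s \<and> w \<in> ball' t (s-(a-b)) u)"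
        proof
          assume "b#w \<in> ball' t s (a#u)"
          then consider (A) i where "i\<in>{1..t}" "b = a+i"
            | (B) "b = a" | (C) i where "i\<in>{1..min s (a-1)}" "b = a-i" "w \<in> ball' t (s-i) u"
            unfolding ball'_Cons_mem by blast
          then show "b \<ge> 1 \<and> a - b \<le> s \<and> w \<in> ball' t (s-(a-b)) u"
          proof cases
            case (A i) then show ?thesis using ba by simp
          next
            case B then show ?thesis using ba by simp
          next
            case (C i)
            then have "a - b = i" by auto
            then show ?thesis using C by auto
          qed
        next
          assume h: "b \<ge> 1 \<and> a - b \<le> s \<and> w \<in> ball' t (s-(a-b)) u"
          then have "a - b \<in> {1..min s (a-1)}" "b = a - (a - b)" using ba by auto
          then show "b#w \<in> ball' t s (a#u)" unfolding ball'_Cons_mem using h by blast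
        qed
        then show ?thesis using ba Pc IH by auto
      qed
    qed
    then show ?thesis using Cons by simp
  qed
qed

lemma idx_sum: "length v = length u \<Longrightarrow> (\<Sum>i<length u. f (u ! i) (v ! i)) = sum_list (map (\<lambda>(x,y). f x y) (zip u v))"
  by (simp add: sum_list_sum_nth atLeast0LessThan)

lemma asym_eq: "\<forall>x\<in>set u. x \<ge> 1 \<Longrightarrow> asym_ball t s u = ball' t s u"
proof -
  assume h: "\<forall>x\<in>set u. x \<ge> 1"
  have "v \<in> asym_ball t s u \<longleftrightarrow> v \<in> ball' t s u" for v
  proof (cases "length v = length u")
    case True
    show ?thesis using ball'_mem[OF h] idx_sum[OF True, of "\<lambda>x y. x - y"] idx_sum[OF True, of "\<lambda>x y. y - x"] True
      by (simp add: asym_ball_def P_def pos_vec_def)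
  next
    case False
    then show ?thesis using ball'_mem[OF h] by (auto simp: asym_ball_def P_def pos_vec_def)
  qed
  then show ?thesis by blast
qed

lemma part1:
  assumes "pos_vec r u" "r \<ge> 1"
  shows "card (asym_ball t s u) \<le> A_num t s r"
proof -
  obtain r' where r: "r = Suc r'" using assms(2) by (cases r) auto
  have "card (asym_ball t s u) = card (ball' t s u)"
    using assms(1) asym_eq by (simp add: pos_vec_def)
  also have "\<dots> \<le> N t s r" using ball'_card[of t s u] assms(1) by (simp add: pos_vec_def)
  finally show ?thesis using A_N r by simp
qed

lemma part2:
  assumes "r \<ge> 1"
  shows "card (asym_ball t s (replicate r (Suc s))) = A_num t s r"
proof -
  obtain r' where r: "r = Suc r'" using assms by (cases r) auto
  have "card (asym_ball t s (replicate r (Suc s))) = card (ball' t s (replicate r (Suc s)))"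
    using asym_eq by simp
  also have "\<dots> = N t s r" using ball'_card[of t s "replicate r (Suc s)"] by simp
  finally show ?thesis using A_N r by simp
qed

fun adj :: "'a list \<Rightarrow> bool" where
  "adj [] = True"
| "adj [c] = True"
| "adj (c#d#cs) = (c \<noteq> d \<and> adj (d#cs))"

lemma adj_iff: "(\<forall>i. Suc i < length cs \<longrightarrow> cs!i \<noteq> cs!Suc i) \<longleftrightarrow> adj cs"
proof (induction cs rule: adj.induct)
  case (3 c d cs)
  have "(\<forall>i. Suc i < length (c#d#cs) \<longrightarrow> (c#d#cs)!i \<noteq> (c#d#cs)!Suc i) \<longleftrightarrow>
        c \<noteq> d \<and> (\<forall>i. Suc i < length (d#cs) \<longrightarrow> (d#cs)!i \<noteq> (d#cs)!Suc i)"
  proof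
    assume h: "\<forall>i. Suc i < length (c#d#cs) \<longrightarrow> (c#d#cs)!i \<noteq> (c#d#cs)!Suc i"
    have "c \<noteq> d" using h[rule_format, of 0] by simp
    moreover have "\<forall>i. Suc i < length (d#cs) \<longrightarrow> (d#cs)!i \<noteq> (d#cs)!Suc i"
    proof (intro allI impI)
      fix i assume "Suc i < length (d#cs)"
      then show "(d#cs)!i \<noteq> (d#cs)!Suc i" using h[rule_format, of "Suc i"] by simp
    qed
    ultimately show "c \<noteq> d \<and> (\<forall>i. Suc i < length (d#cs) \<longrightarrow> (d#cs)!i \<noteq> (d#cs)!Suc i)" ..
  next
    assume h: "c \<noteq> d \<and> (\<forall>i. Suc i < length (d#cs) \<longrightarrow> (d#cs)!i \<noteq> (d#cs)!Suc i)"
    show "\<forall>i. Suc i < length (c#d#cs) \<longrightarrow> (c#d#cs)!i \<noteq> (c#d#cs)!Suc i"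
    proof (intro allI impI)
      fix i assume i: "Suc i < length (c#d#cs)"
      show "(c#d#cs)!i \<noteq> (c#d#cs)!Suc i"
      proof (cases i)
        case 0 then show ?thesis using h by simp
      next
        case (Suc j) then show ?thesis using h i by auto
      qed
    qed
  qed
  then show ?case using 3 by simp
qed (auto simp: less_Suc_eq)

lemma rs_Nil[simp]: "runs_string [] us = []"
  by (simp add: runs_string_def)

lemma rs_Cons[simp]: "runs_string (c#cs) (u#us) = replicate u c @ runs_string cs us"
  by (simp add: runs_string_def)

lemma rs_hd:
  assumes "adj (c#cs)" "length cs = length us" "\<forall>x\<in>set us. x \<ge> 1"
  shows "takeWhile (\<lambda>y. y = c) (runs_string cs us) = []"
proof (cases cs)
  case Nil then show ?thesis by simp
next
  case (Cons d cs')
  then obtain v us' where us: "us = v#us'" using assms(2) by (cases us) auto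
  then obtain k where "v = Suc k" using assms(3) by (cases v) auto
  then show ?thesis using assms(1) Cons us by auto
qed

lemma rs_unique:
  assumes "adj cs" "length cs = length us" "length cs = length us'"
    "\<forall>x\<in>set us. x \<ge> 1" "\<forall>x\<in>set us'. x \<ge> 1" "runs_string cs us = runs_string cs us'"
  shows "us = us'"
  using assms
proof (induction cs arbitrary: us us')
  case Nil then show ?case by simp
next
  case (Cons c cs)
  obtain u ur where us: "us = u#ur" using Cons.prems(2) by (cases us) auto
  obtain u' ur' where us': "us' = u'#ur'" using Cons.prems(3) by (cases us') auto
  have adjc: "adj cs" using Cons.prems(1) by (cases cs) auto
  have e: "replicate u c @ runs_string cs ur = replicate u' c @ runs_string cs ur'"
    using Cons.prems(6) us us' by simp
  have "takeWhile (\<lambda>y. y = c) (replicate u c @ runs_string cs ur) = replicate u c"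
    using rs_hd[OF Cons.prems(1), of ur] Cons.prems(2,4) us by (subst takeWhile_append2) auto
  moreover have "takeWhile (\<lambda>y. y = c) (replicate u' c @ runs_string cs ur') = replicate u' c"
    using rs_hd[OF Cons.prems(1), of ur'] Cons.prems(3,5) us' by (subst takeWhile_append2) auto
  ultimately have uu: "u = u'" using e by (metis length_replicate)
  then have "runs_string cs ur = runs_string cs ur'" using e by simp
  then have "ur = ur'" using Cons.IH[OF adjc, of ur ur'] Cons.prems us us' by simp
  then show ?case using uu us us' by simp
qed

lemma remdups_rep: "c \<noteq> d \<Longrightarrow> remdups_adj (replicate (Suc k) c @ d # r) = c # remdups_adj (d#r)"
  by (induction k) auto

lemma remdups_rep1: "remdups_adj (c # replicate k c) = [c]"
  by (induction k) auto

lemma rs_remdups: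
  assumes "adj cs" "length cs = length us" "\<forall>x\<in>set us. x \<ge> 1"
  shows "remdups_adj (runs_string cs us) = cs"
  using assms
proof (induction cs arbitrary: us)
  case Nil then show ?case by simp
next
  case (Cons c cs)
  obtain u ur where us: "us = u#ur" using Cons.prems(2) by (cases us) auto
  obtain k where k: "u = Suc k" using Cons.prems(3) us by (cases u) auto
  have adjc: "adj cs" using Cons.prems(1) by (cases cs) auto
  have IH: "remdups_adj (runs_string cs ur) = cs" using Cons.IH[OF adjc, of ur] Cons.prems us by simp
  note prems = Cons.prems
  show ?case
  proof (cases cs)
    case Nil
    then have "ur = []" using Cons.prems(2) us by simp
    then show ?thesis using Nil us k by (simp add: remdups_rep1)
  next
    case Cons2: (Cons d cs')
    then obtain v ur' where ur: "ur = v#ur'" using prems(2) us by (cases ur) auto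
    then obtain j where j: "v = Suc j" using prems(3) us by (cases v) auto
    have cd: "c \<noteq> d" using prems(1) Cons2 by simp
    have "runs_string cs ur = d # (replicate j d @ runs_string cs' ur')" using Cons2 ur j by simp
    then show ?thesis using us k remdups_rep[OF cd, of k] IH by simp
  qed
qed

lemma rs_set: "set (runs_string cs us) \<subseteq> set cs"
  by (auto simp: runs_string_def dest: set_zip_leftD)

lemma sticky_eq:
  assumes "adj cs" "length cs = length us" "pos_vec (length cs) us" "x = runs_string cs us"
  shows "sticky_ball t s x = runs_string cs ` asym_ball t s us"
proof
  show "sticky_ball t s x \<subseteq> runs_string cs ` asym_ball t s us"
  proof
    fix y assume "y \<in> sticky_ball t s x"
    then obtain cs' us' vs where h: "y = runs_string cs' vs" "runs_string cs' us' = x"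
      "length cs' = length us'" "pos_vec (length cs') us'"
      "\<forall>i. Suc i < length cs' \<longrightarrow> cs' ! i \<noteq> cs' ! Suc i" "vs \<in> asym_ball t s us'"
      unfolding sticky_ball_def by blast
    have a': "adj cs'" using h(5) adj_iff by blast
    have "cs' = cs" using rs_remdups[OF a' h(3)] rs_remdups[OF assms(1,2)] h(2,4) assms(3,4)
      by (simp add: pos_vec_def)
    moreover have "us' = us" using rs_unique[OF assms(1), of us' us] h(2,3,4) assms `cs' = cs`
      by (simp add: pos_vec_def)
    ultimately show "y \<in> runs_string cs ` asym_ball t s us" using h by simp
  qed
next
  show "runs_string cs ` asym_ball t s us \<subseteq> sticky_ball t s x"
    using assms adj_iff[of cs] unfolding sticky_ball_def by blast
qed

lemma rs_inj:
  assumes "adj cs" "length cs = length us"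
  shows "inj_on (runs_string cs) (asym_ball t s us)"
  using rs_unique[OF assms(1)] assms(2) by (auto simp: inj_on_def asym_ball_def pos_vec_def)

lemma asym_finite: "pos_vec r u \<Longrightarrow> finite (asym_ball t s u)"
  using asym_eq ball'_finite by (simp add: pos_vec_def)

theorem mainTheorem2:
  fixes t s r q :: nat
  assumes "r \<ge> 1"
  shows "(\<forall>u. pos_vec r u \<longrightarrow> card (asym_ball t s u) \<le> A_num t s r) \<and>
         (\<exists>u. pos_vec r u \<and> card (asym_ball t s u) = A_num t s r) \<and>
         (q \<ge> 2 \<longrightarrow>
           (\<forall>x\<in>J_star q r. card (sticky_ball t s x) \<le> A_num t s r) \<and>
           (\<exists>x\<in>J_star q r. card (sticky_ball t s x) = A_num t s r))"
proof (intro conjI impI)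
  show "\<forall>u. pos_vec r u \<longrightarrow> card (asym_ball t s u) \<le> A_num t s r"
    using part1 assms by blast
  show "\<exists>u. pos_vec r u \<and> card (asym_ball t s u) = A_num t s r"
    using part2[OF assms] by (intro exI[of _ "replicate r (Suc s)"]) (auto simp: pos_vec_def)
  show "\<forall>x\<in>J_star q r. card (sticky_ball t s x) \<le> A_num t s r"
  proof
    fix x assume x: "x \<in> J_star q r"
    show "card (sticky_ball t s x) \<le> A_num t s r"
    proof (cases "sticky_ball t s x = {}")
      case True then show ?thesis by simp
    next
      case False
      then obtain y where "y \<in> sticky_ball t s x" by blast
      then obtain cs us where h: "runs_string cs us = x"
        "length cs = length us" "pos_vec (length cs) us"
        "\<forall>i. Suc i < length cs \<longrightarrow> cs ! i \<noteq> cs ! Suc i"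
        unfolding sticky_ball_def by blast
      have a: "adj cs" using h(4) adj_iff by blast
      have "length cs = r" using rs_remdups[OF a h(2)] h x by (simp add: J_star_def pos_vec_def)
      then have pv: "pos_vec r us" using h(3) by simp
      have "card (sticky_ball t s x) = card (runs_string cs ` asym_ball t s us)"
        using sticky_eq[OF a h(2) h(3) h(1)[symmetric]] by simp
      also have "\<dots> \<le> card (asym_ball t s us)" by (rule card_image_le[OF asym_finite[OF pv]])
      also have "\<dots> \<le> A_num t s r" using part1[OF pv assms] .
      finally show ?thesis .
    qed
  qed
  assume q: "q \<ge> 2"
  define cs where "cs = map (\<lambda>i. i mod 2) [0..<r]"
  define us where "us = replicate r (Suc s)"
  define x where "x = runs_string cs us"
  have h4: "\<forall>i. Suc i < length cs \<longrightarrow> cs ! i \<noteq> cs ! Suc i"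
    unfolding cs_def by (auto simp del: upt_Suc) presburger
  then have a: "adj cs" using adj_iff by blast
  have l: "length cs = length us" "length cs = r" by (simp_all add: cs_def us_def)
  have pv: "pos_vec (length cs) us" using l by (simp add: pos_vec_def us_def)
  have "set x \<subseteq> {0..<q}"
  proof -
    have "set cs \<subseteq> {0..<q}" using q by (auto simp: cs_def)
    then show ?thesis using rs_set[of cs us] x_def by blast
  qed
  moreover have "length (remdups_adj x) = r"
    using rs_remdups[OF a l(1)] pv l x_def by (simp add: pos_vec_def)
  ultimately have xJ: "x \<in> J_star q r" by (simp add: J_star_def)
  have "card (sticky_ball t s x) = card (runs_string cs ` asym_ball t s us)"
    using sticky_eq[OF a l(1) pv x_def] by simp
  also have "\<dots> = card (asym_ball t s us)" by (rule card_image[OF rs_inj[OF a l(1)]])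
  also have "\<dots> = A_num t s r" using part2[OF assms] by (simp add: us_def)
  finally show "\<exists>x\<in>J_star q r. card (sticky_ball t s x) = A_num t s r" using xJ by blast
qed

end
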